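(* Let $\mu^\ast$ be an upper quasi-density on $\mathbb{H}$ and $\mu_\ast(X):=1-\mu^\ast(\mathbb{H}\setminus X)$ the associated lower quasi-density. Then both $\mu^\ast$ and $\mu_\ast$ have the weak Darboux property: for $f\in\{\mu^\ast,\mu_\ast\}$, every $X\subseteq\mathbb{H}$ and every $a\in[f(\emptyset),f(X)]$, there exists $A\subseteq X$ with $f(A)=a$.
   Context: $\mathbb{N}=\{0,1,2,\dots\}$, $\mathbb{N}^+=\{1,2,\dots\}$; $\mathbb{H}$ is one of $\mathbb{Z},\mathbb{N},\mathbb{N}^+$. For $X\subseteq\mathbb{H}$, $k\in\mathbb{N}^+$, $h\in\mathbb{N}$, $k\cdot X+h:=\{kx+h:x\in X\}$. An upper quasi-density on $\mathbb{H}$ is a function $\mu^\ast:\mathcal{P}(\mathbb{H})\to\mathbb{R}$ with $\mu^\ast(\mathbb{H})=1$, $\mu^\ast(X)\le1$ for all $X$, $\mu^\ast(X\cup Y)\le\mu^\ast(X)+\mu^\ast(Y)$ for all $X,Y$, and $\mu^\ast(k\cdot X+h)=\frac1k\mu^\ast(X)$ for all $X\subseteq\mathbb{H}$, $h,k\in\mathbb{N}^+$. *)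

theory Defs
  imports Complex_Main
begin

text \<open>The ambient set H is one of Z, N, N+, all represented as subsets of int.\<close>
definition admissible_H :: "int set \<Rightarrow> bool" where
  "admissible_H H \<longleftrightarrow> H = UNIV \<or> H = {0..} \<or> H = {1..}"

definition dil :: "int \<Rightarrow> int \<Rightarrow> int set \<Rightarrow> int set" where
  "dil k h X = (\<lambda>x. k * x + h) ` X"

definition upper_quasi_density :: "int set \<Rightarrow> (int set \<Rightarrow> real) \<Rightarrow> bool" where
  "upper_quasi_density H \<mu> \<longleftrightarrow>
     \<mu> H = 1 \<and>
     (\<forall>X. X \<subseteq> H \<longrightarrow> \<mu> X \<le> 1) \<and>
     (\<forall>X Y. X \<subseteq> H \<longrightarrow> Y \<subseteq> H \<longrightarrow> \<mu> (X \<union> Y) \<le> \<mu> X + \<mu> Y) \<and>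
     (\<forall>X h k. X \<subseteq> H \<longrightarrow> h \<ge> 1 \<longrightarrow> k \<ge> 1 \<longrightarrow> \<mu> (dil k h X) = \<mu> X / real_of_int k)"

definition lower_qd :: "int set \<Rightarrow> (int set \<Rightarrow> real) \<Rightarrow> int set \<Rightarrow> real" where
  "lower_qd H \<mu> X = 1 - \<mu> (H - X)"

definition weak_darboux :: "int set \<Rightarrow> (int set \<Rightarrow> real) \<Rightarrow> bool" where
  "weak_darboux H f \<longleftrightarrow>
     (\<forall>X a. X \<subseteq> H \<longrightarrow> f {} \<le> a \<longrightarrow> a \<le> f X \<longrightarrow> (\<exists>A. A \<subseteq> X \<and> f A = a))"

end

theory Submission
  imports Defs
begin

fun rb :: "nat \<Rightarrow> int \<Rightarrow> int" where
  "rb 0 x = 0"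
| "rb (Suc n) x = 2 * rb n x + (x div 2^n) mod 2"

lemma rb_bounds: "0 \<le> rb n x \<and> rb n x < 2^n"
proof (induction n)
  case 0 then show ?case by simp
next
  case (Suc n)
  have "0 \<le> (x div 2^n) mod 2" "(x div 2^n) mod 2 < 2" by auto
  moreover have "rb n x + 1 \<le> 2^n" using Suc by simp
  ultimately show ?case using Suc.IH by (simp; linarith)
qed

lemma aux2: "2*a + b = 2*c + (d::int) \<Longrightarrow> 0\<le>b \<Longrightarrow> b<2 \<Longrightarrow> 0\<le>d \<Longrightarrow> d<2 \<Longrightarrow> a = c \<and> b = d"
  by presburger

lemma rb_inj: "rb n x = rb n y \<Longrightarrow> x mod 2^n = y mod 2^n"
proof (induction n)
  case 0 then show ?case by simp
next
  case (Suc n)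
  have b: "0 \<le> (x div 2^n) mod 2" "(x div 2^n) mod 2 < 2"
     "0 \<le> (y div 2^n) mod 2" "(y div 2^n) mod 2 < 2" by auto
  from Suc.prems have "2 * rb n x + (x div 2^n) mod 2 = 2 * rb n y + (y div 2^n) mod 2" by simp
  with b have e: "rb n x = rb n y \<and> (x div 2^n) mod 2 = (y div 2^n) mod 2"
    using aux2[of "rb n x" "(x div 2^n) mod 2" "rb n y" "(y div 2^n) mod 2"] by blast
  hence IH: "x mod 2^n = y mod 2^n" using Suc.IH by simp
  have mx: "x mod (2^n * 2) = 2^n * (x div 2^n mod 2) + x mod 2^n"
    using mod_mult2_eq' [of x "2^n" 2] by simp
  have my: "y mod (2^n * 2) = 2^n * (y div 2^n mod 2) + y mod 2^n"
    using mod_mult2_eq' [of y "2^n" 2] by simp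
  show ?case unfolding power_Suc2 using mx my e IH by simp
qed

definition lo :: "nat \<Rightarrow> int \<Rightarrow> real" where "lo n x = real_of_int (rb n x) / 2^n"
definition up :: "nat \<Rightarrow> int \<Rightarrow> real" where "up n x = (real_of_int (rb n x) + 1) / 2^n"

lemma lo_step: "lo n x \<le> lo (Suc n) x"
proof -
  have "2 * rb n x \<le> rb (Suc n) x" by simp
  hence "real_of_int (2 * rb n x) \<le> real_of_int (rb (Suc n) x)" by (simp only: of_int_le_iff)
  thus ?thesis unfolding lo_def by (simp add: field_simps)
qed

lemma up_step: "up (Suc n) x \<le> up n x"
proof -
  have "(x div 2^n) mod 2 < 2" by simp
  hence "rb (Suc n) x + 1 \<le> 2 * rb n x + 2" by simp
  hence "real_of_int (rb (Suc n) x + 1) \<le> real_of_int (2 * rb n x + 2)" by (simp only: of_int_le_iff)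
  thus ?thesis unfolding up_def by (simp add: field_simps)
qed

lemma lo_mono: "m \<le> n \<Longrightarrow> lo m x \<le> lo n x"
  using lift_Suc_mono_le[of "\<lambda>n. lo n x"] lo_step by blast

lemma up_mono: "m \<le> n \<Longrightarrow> up n x \<le> up m x"
  using lift_Suc_antimono_le[of "\<lambda>n. up n x"] up_step by blast

lemma lo_up: "lo n x < up n x"
  unfolding lo_def up_def by (simp add: divide_strict_right_mono)

lemma up_pos: "0 < up n x"
  using rb_bounds[of n x] unfolding up_def by simp

definition Aset :: "int set \<Rightarrow> real \<Rightarrow> int set" where
  "Aset X t = {x \<in> X. \<exists>n. up n x \<le> t}"

lemma Aset_0: "Aset X 0 = {}"
  using up_pos unfolding Aset_def by (auto simp: not_le)

lemma Aset_1: "Aset X 1 = X"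
proof -
  have "up 0 x \<le> 1" for x unfolding up_def by simp
  thus ?thesis unfolding Aset_def by auto
qed

lemma Aset_mono: "t \<le> t' \<Longrightarrow> Aset X t \<subseteq> Aset X t'"
  unfolding Aset_def by (auto intro: order_trans)

lemma Aset_sub: "Aset X t \<subseteq> X"
  unfolding Aset_def by auto

lemma diff_R:
  assumes "t < t'" "t' \<le> t + 1/2^N" "x \<in> Aset X t' - Aset X t"
  shows "rb N x = \<lfloor>t*2^N\<rfloor> \<or> rb N x = \<lfloor>t*2^N\<rfloor> + 1"
proof -
  from assms(3) obtain n where x: "x \<in> X" "up n x \<le> t'" and nt: "\<forall>m. \<not> up m x \<le> t"
    unfolding Aset_def by auto
  have "lo N x < t'"
  proof (cases "n \<le> N")
    case True then have "up N x \<le> up n x" by (rule up_mono)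
    thus ?thesis using x lo_up[of N x] by linarith
  next
    case False then have "lo N x \<le> lo n x" by (intro lo_mono) auto
    thus ?thesis using x lo_up[of n x] by linarith
  qed
  hence r1: "real_of_int (rb N x) < t' * 2^N" unfolding lo_def by (simp add: pos_divide_less_eq)
  have "t < up N x" using nt by (simp add: not_le)
  hence r2: "t * 2^N < real_of_int (rb N x) + 1" unfolding up_def by (simp add: pos_less_divide_eq)
  have "t' * 2^N \<le> (t + 1/2^N) * 2^N" using assms(2) by (intro mult_right_mono) auto
  moreover have "(t + 1/2^N) * 2^N = t * 2^N + (1::real)" by (simp add: distrib_right)
  ultimately have r3: "t' * 2^N \<le> t * 2^N + 1" by simp
  define f where "f = \<lfloor>t*2^N\<rfloor>"
  have f1: "real_of_int f \<le> t * 2^N" "t * 2^N < real_of_int f + 1" unfolding f_def by linarith+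
  have "real_of_int (rb N x) < real_of_int (f + 2)" using r1 r3 f1 by simp
  hence a: "rb N x < f + 2" by (simp only: of_int_less_iff)
  have "real_of_int (f - 1) < real_of_int (rb N x)" using r2 f1 by simp
  hence b: "f - 1 < rb N x" by (simp only: of_int_less_iff)
  from a b show ?thesis unfolding f_def by linarith
qed

lemma eps_lemma:
  fixes x y :: real
  assumes "\<And>N::nat. x \<le> y + 2/2^N"
  shows "x \<le> y"
proof (rule ccontr)
  assume "\<not> x \<le> y"
  hence "(x - y)/2 > 0" by simp
  then obtain N where N: "(1/2::real)^N < (x - y)/2" using real_arch_pow_inv[of "(x-y)/2" "1/2"] by auto
  have "(1/2::real)^N = 1/2^N" by (simp add: power_one_over)
  with N have "2/2^N < x - y" by simp
  with assms[of N] show False by simp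
qed

lemma ivt:
  fixes f :: "real \<Rightarrow> real"
  assumes P: "\<And>N t t'. 0 \<le> t \<Longrightarrow> t < t' \<Longrightarrow> t' \<le> 1 \<Longrightarrow> t' \<le> t + 1/2^N \<Longrightarrow> f t' \<le> f t + 2/2^N"
    and f0: "f 0 \<le> a" and f1: "a \<le> f 1"
  shows "\<exists>t. 0 \<le> t \<and> t \<le> 1 \<and> f t = a"
proof -
  define T where "T = {t. 0 \<le> t \<and> t \<le> 1 \<and> a \<le> f t}"
  define s where "s = Inf T"
  have T1: "1 \<in> T" using f1 unfolding T_def by simp
  have bdd: "bdd_below T" unfolding T_def by (rule bdd_belowI[of _ 0]) auto
  have s0: "0 \<le> s" unfolding s_def using T1 by (intro cInf_greatest) (auto simp: T_def)
  have s1: "s \<le> 1" unfolding s_def using T1 bdd by (rule cInf_lower)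
  have A: "a \<le> f s + 2/2^N" for N
  proof -
    have "s < s + 1/2^N" by simp
    then obtain t where t: "t \<in> T" "t < s + 1/2^N" unfolding s_def using T1
      by (metis cInf_lessD empty_iff)
    have ts: "s \<le> t" unfolding s_def using t(1) bdd by (rule cInf_lower)
    show ?thesis
    proof (cases "t = s")
      case True then show ?thesis using t(1) unfolding T_def by (simp add: add_increasing2)
    next
      case False
      with ts have "s < t" by simp
      hence "f t \<le> f s + 2/2^N" using P[of s t N] s0 t unfolding T_def by simp
      thus ?thesis using t(1) unfolding T_def by simp
    qed
  qed
  have B: "f s \<le> a + 2/2^N" for N
  proof (cases "s = 0")
    case True then show ?thesis using f0 by (simp add: add_increasing2)
  next
    case False
    define t where "t = max 0 (s - 1/2^N)"
    have tl: "t < s" using False s0 unfolding t_def by simp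
    have "t \<notin> T"
    proof
      assume "t \<in> T"
      hence "s \<le> t" unfolding s_def using bdd by (rule cInf_lower)
      with tl show False by simp
    qed
    moreover have "0 \<le> t" "t \<le> 1" using s1 tl unfolding t_def by (auto simp: max_def)
    ultimately have "f t < a" unfolding T_def by auto
    moreover have "f s \<le> f t + 2/2^N" using P[of t s N] tl s1 \<open>0 \<le> t\<close> unfolding t_def by simp
    ultimately show ?thesis by simp
  qed
  have "f s = a" using eps_lemma[of a "f s"] eps_lemma[of "f s" a] A B by (simp add: antisym)
  with s0 s1 show ?thesis by blast
qed


context
  fixes H :: "int set" and \<mu> :: "int set \<Rightarrow> real"
  assumes adm: "admissible_H H" and uqd: "upper_quasi_density H \<mu>"
begin

lemma uH: "\<mu> H = 1" using uqd unfolding upper_quasi_density_def by blast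
lemma ule1: "X \<subseteq> H \<Longrightarrow> \<mu> X \<le> 1" using uqd unfolding upper_quasi_density_def by blast
lemma usub: "X \<subseteq> H \<Longrightarrow> Y \<subseteq> H \<Longrightarrow> \<mu> (X \<union> Y) \<le> \<mu> X + \<mu> Y"
  using uqd unfolding upper_quasi_density_def by blast
lemma udil: "X \<subseteq> H \<Longrightarrow> 1 \<le> h \<Longrightarrow> 1 \<le> k \<Longrightarrow> \<mu> (dil k h X) = \<mu> X / real_of_int k"
  using uqd unfolding upper_quasi_density_def by blast

lemma u_empty: "\<mu> {} = 0"
proof -
  have "dil 2 1 {} = {}" by (simp add: dil_def)
  hence "\<mu> {} = \<mu> {} / 2" using udil[of "{}" 1 2] by simp
  thus ?thesis by simp
qed

lemma u_nonneg: "X \<subseteq> H \<Longrightarrow> 0 \<le> \<mu> X"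
  using usub[of X X] by simp

lemma u_single_nn: "x \<in> H \<Longrightarrow> 0 \<le> x \<Longrightarrow> \<mu> {x} = 0"
proof -
  assume x: "x \<in> H" "0 \<le> x"
  have "dil 2 1 {x} = {2*x+1}" "dil 1 (x+1) {x} = {2*x+1}" by (simp_all add: dil_def)
  hence "\<mu> {x} / 2 = \<mu> {x}" using udil[of "{x}" 1 2] udil[of "{x}" "x+1" 1] x by simp
  thus ?thesis by simp
qed

lemma u_single: "x \<in> H \<Longrightarrow> \<mu> {x} = 0"
proof (cases "0 \<le> x")
  case True then show "x \<in> H \<Longrightarrow> \<mu> {x} = 0" using u_single_nn by simp
next
  case False
  assume x: "x \<in> H"
  have HU: "H = UNIV" using adm False x unfolding admissible_H_def by auto
  have "dil 1 (-x) {x} = {0}" by (simp add: dil_def)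
  hence "\<mu> {0} = \<mu> {x}" using udil[of "{x}" "-x" 1] False HU by simp
  moreover have "\<mu> {0} = 0" using u_single_nn[of 0] HU by simp
  ultimately show ?thesis by simp
qed

lemma u_finite: "finite F \<Longrightarrow> F \<subseteq> H \<Longrightarrow> \<mu> F \<le> 0"
proof (induction F rule: finite_induct)
  case empty then show ?case by (simp add: u_empty)
next
  case (insert x F)
  have "\<mu> ({x} \<union> F) \<le> \<mu> {x} + \<mu> F" using insert by (intro usub) auto
  thus ?case using insert u_single[of x] by simp
qed

lemma shrink:
  assumes T: "T \<subseteq> H" and m: "1 \<le> m" and c: "\<forall>x\<in>T. x mod m = c" and c0: "0 \<le> c"
    and Y: "(\<lambda>x. (x - (c+m)) div m) ` T \<subseteq> H"
  shows "\<mu> T \<le> 1 / real_of_int m"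
proof -
  let ?h = "c + m"
  have key: "m * ((x - ?h) div m) + ?h = x" if "x \<in> T" for x
  proof -
    have x: "x = m * (x div m) + c" using c that by (metis mult_div_mod_eq)
    hence "x - ?h = m * (x div m - 1)" by (simp add: algebra_simps)
    hence q: "(x - ?h) div m = x div m - 1" using m by simp
    have "m * ((x - ?h) div m) = m * (x div m) - m" unfolding q by (simp add: right_diff_distrib)
    thus ?thesis using x by linarith
  qed
  have "dil m ?h ((\<lambda>x. (x - ?h) div m) ` T) = T"
    unfolding dil_def image_image using key by simp
  moreover have "\<mu> (dil m ?h ((\<lambda>x. (x - ?h) div m) ` T)) = \<mu> ((\<lambda>x. (x - ?h) div m) ` T) / real_of_int m"
    using udil[OF Y, of ?h m] m c0 by simp
  ultimately have "\<mu> T = \<mu> ((\<lambda>x. (x - ?h) div m) ` T) / real_of_int m" by simp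
  moreover have "\<mu> ((\<lambda>x. (x - ?h) div m) ` T) \<le> 1" using ule1[OF Y] .
  ultimately show ?thesis using m by (simp add: divide_right_mono)
qed

lemma cong_small:
  assumes S: "S \<subseteq> H" and m: "1 \<le> m" and cg: "\<forall>x\<in>S. \<forall>y\<in>S. x mod m = y mod m"
  shows "\<mu> S \<le> 1 / real_of_int m"
proof (cases "S = {}")
  case True then show ?thesis using m by (simp add: u_empty)
next
  case False
  then obtain x0 where x0: "x0 \<in> S" by auto
  define c where "c = x0 mod m"
  have c: "\<forall>x\<in>S. x mod m = c" using cg x0 unfolding c_def by blast
  have c0: "0 \<le> c" using m unfolding c_def by simp
  show ?thesis
  proof (cases "H = UNIV")
    case True then show ?thesis using shrink[OF S m c c0] by simp
  next
    case False
    hence "H = {0..} \<or> H = {1..}" using adm unfolding admissible_H_def by blast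
    hence HH: "{1..} \<subseteq> H" "H \<subseteq> {0..}" by (elim disjE; simp)+
    define S1 where "S1 = {x\<in>S. c + m + m \<le> x}"
    define S2 where "S2 = {x\<in>S. x < c + m + m}"
    have Y: "(\<lambda>x. (x - (c+m)) div m) ` S1 \<subseteq> H"
    proof
      fix y assume "y \<in> (\<lambda>x. (x - (c+m)) div m) ` S1"
      then obtain x where x: "x \<in> S1" "y = (x - (c+m)) div m" by auto
      have "m \<le> x - (c+m)" using x(1) unfolding S1_def by simp
      hence "m div m \<le> (x - (c+m)) div m" using m by (intro zdiv_mono1) auto
      hence "1 \<le> y" using m x(2) by simp
      thus "y \<in> H" using HH by auto
    qed
    have S1H: "S1 \<subseteq> H" using S unfolding S1_def by blast
    have S1c: "\<forall>x\<in>S1. x mod m = c" using c unfolding S1_def by blast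
    have a: "\<mu> S1 \<le> 1 / real_of_int m" using shrink[OF S1H m S1c c0 Y] .
    have S2H: "S2 \<subseteq> H" using S unfolding S2_def by blast
    have "S2 \<subseteq> {0..<c+m+m}" using S2H HH unfolding S2_def by (auto simp: subset_iff)
    hence "finite S2" by (rule finite_subset) simp
    hence b: "\<mu> S2 \<le> 0" using u_finite S2H by blast
    have "S = S1 \<union> S2" unfolding S1_def S2_def by force
    hence "\<mu> S \<le> \<mu> S1 + \<mu> S2" using usub[OF S1H S2H] by simp
    with a b show ?thesis by simp
  qed
qed

lemma step_bound:
  assumes X: "X \<subseteq> H" and tt: "t < t'" "t' \<le> t + 1/2^N"
  shows "\<mu> (Aset X t') \<le> \<mu> (Aset X t) + 2/2^N"
    and "\<mu> (H - Aset X t) \<le> \<mu> (H - Aset X t') + 2/2^N"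
proof -
  define f where "f = \<lfloor>t*2^N\<rfloor>"
  define D1 where "D1 = {x \<in> Aset X t' - Aset X t. rb N x = f}"
  define D2 where "D2 = {x \<in> Aset X t' - Aset X t. rb N x = f + 1}"
  have D: "Aset X t' - Aset X t = D1 \<union> D2"
  proof
    show "Aset X t' - Aset X t \<subseteq> D1 \<union> D2"
    proof
      fix x assume x: "x \<in> Aset X t' - Aset X t"
      have "rb N x = f \<or> rb N x = f + 1" using diff_R[OF tt x] unfolding f_def .
      thus "x \<in> D1 \<union> D2" using x unfolding D1_def D2_def by blast
    qed
    show "D1 \<union> D2 \<subseteq> Aset X t' - Aset X t" unfolding D1_def D2_def by blast
  qed
  have sub: "D1 \<subseteq> H" "D2 \<subseteq> H" using Aset_sub X unfolding D1_def D2_def by blast+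
  have m: "(1::int) \<le> 2^N" by simp
  have "\<forall>x\<in>D1. \<forall>y\<in>D1. x mod 2^N = y mod 2^N" unfolding D1_def by (auto intro!: rb_inj)
  hence "\<mu> D1 \<le> 1 / real_of_int (2^N)" using cong_small[OF sub(1) m] by blast
  hence d1: "\<mu> D1 \<le> 1 / 2^N" by simp
  have "\<forall>x\<in>D2. \<forall>y\<in>D2. x mod 2^N = y mod 2^N" unfolding D2_def by (auto intro!: rb_inj)
  hence "\<mu> D2 \<le> 1 / real_of_int (2^N)" using cong_small[OF sub(2) m] by blast
  hence d2: "\<mu> D2 \<le> 1 / 2^N" by simp
  have d12: "\<mu> (D1 \<union> D2) \<le> 2 / 2^N" using usub[OF sub] d1 d2 by simp
  have AH: "Aset X t \<subseteq> H" "Aset X t' \<subseteq> H" using Aset_sub X by blast+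
  have mono: "Aset X t \<subseteq> Aset X t'" using Aset_mono tt by simp
  have "Aset X t' = Aset X t \<union> (Aset X t' - Aset X t)" using mono by blast
  hence "Aset X t' = Aset X t \<union> (D1 \<union> D2)" unfolding D .
  hence "\<mu> (Aset X t') \<le> \<mu> (Aset X t) + \<mu> (D1 \<union> D2)"
    using usub[of "Aset X t" "D1 \<union> D2"] AH sub by simp
  thus "\<mu> (Aset X t') \<le> \<mu> (Aset X t) + 2/2^N" using d12 by simp
  have "H - Aset X t = (H - Aset X t') \<union> (Aset X t' - Aset X t)" using mono AH by blast
  hence "H - Aset X t = (H - Aset X t') \<union> (D1 \<union> D2)" unfolding D .
  hence "\<mu> (H - Aset X t) \<le> \<mu> (H - Aset X t') + \<mu> (D1 \<union> D2)"
    using usub[of "H - Aset X t'" "D1 \<union> D2"] sub by simp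
  thus "\<mu> (H - Aset X t) \<le> \<mu> (H - Aset X t') + 2/2^N" using d12 by simp
qed

lemma wd1: "weak_darboux H \<mu>"
  unfolding weak_darboux_def
proof (intro allI impI)
  fix X a assume X: "X \<subseteq> H" and a: "\<mu> {} \<le> a" "a \<le> \<mu> X"
  have "\<exists>t. 0 \<le> t \<and> t \<le> 1 \<and> \<mu> (Aset X t) = a"
  proof (rule ivt)
    fix N :: nat and t t' :: real assume "0 \<le> t" "t < t'" "t' \<le> 1" "t' \<le> t + 1/2^N"
    thus "\<mu> (Aset X t') \<le> \<mu> (Aset X t) + 2/2^N"
      using step_bound(1)[OF X \<open>t < t'\<close> \<open>t' \<le> t + 1/2^N\<close>] by linarith
  next
    show "\<mu> (Aset X 0) \<le> a" using a by (simp only: Aset_0)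
  next
    show "a \<le> \<mu> (Aset X 1)" using a by (simp only: Aset_1)
  qed
  thus "\<exists>A. A \<subseteq> X \<and> \<mu> A = a" using Aset_sub by blast
qed

lemma wd2: "weak_darboux H (lower_qd H \<mu>)"
  unfolding weak_darboux_def lower_qd_def
proof (intro allI impI)
  fix X a assume X: "X \<subseteq> H" and a: "1 - \<mu> (H - {}) \<le> a" "a \<le> 1 - \<mu> (H - X)"
  have "\<exists>t. 0 \<le> t \<and> t \<le> 1 \<and> - \<mu> (H - Aset X t) = a - 1"
  proof (rule ivt)
    fix N :: nat and t t' :: real assume "0 \<le> t" "t < t'" "t' \<le> 1" "t' \<le> t + 1/2^N"
    thus "- \<mu> (H - Aset X t') \<le> - \<mu> (H - Aset X t) + 2/2^N"
      using step_bound(2)[OF X \<open>t < t'\<close> \<open>t' \<le> t + 1/2^N\<close>] by linarith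
  next
    show "- \<mu> (H - Aset X 0) \<le> a - 1" using a uH by (simp add: Aset_0)
  next
    show "a - 1 \<le> - \<mu> (H - Aset X 1)" using a unfolding Aset_1 by linarith
  qed
  then obtain t where "- \<mu> (H - Aset X t) = a - 1" by blast
  hence "1 - \<mu> (H - Aset X t) = a" by simp
  thus "\<exists>A. A \<subseteq> X \<and> 1 - \<mu> (H - A) = a" using Aset_sub by blast
qed

end

theorem mainTheorem2:
  fixes H :: "int set" and \<mu> :: "int set \<Rightarrow> real"
  assumes "admissible_H H"
    and "upper_quasi_density H \<mu>"
  shows "weak_darboux H \<mu> \<and> weak_darboux H (lower_qd H \<mu>)"
  using wd1[OF assms] wd2[OF assms] by blast

end
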